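(* Let $K$ be the irreducible cyclic code of length $n$ over $GF(q)$ with monic irreducible parity-check polynomial of degree $m>1$ and order $n\ne q^m-1$, and let $d=\gcd(q-1,n)$, $r=n/d$, $R=(q^m-1)/(q-1)$, $b=(q-1)/d$, and $s$ the number of cycles of nonzero codewords of $K$. If $s=b$, then $K$ is equidistant, i.e. all nonzero codewords of $K$ have the same Hamming weight. Moreover, the conditions $s=b$, $r=R$, and $\gcd(s,R)=1$ are equivalent.
   Context: Let $q>2$ be a prime power. $A_n=GF(q)[x]/(x^n-1)$; Hamming weight of an element = number of nonzero coefficients of its representative of degree $<n$. The order of $h$ is the least $e\ge1$ with $h\mid x^e-1$. $K$ is the ideal of $A_n$ generated by $(x^n-1)/h(x)$. The cycle of nonzero $z$ is $\{x^iz:i\ge0\}$. *)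

theory Defs
  imports "HOL-Computational_Algebra.Polynomial" "HOL-Computational_Algebra.Polynomial_Factorial"
begin

definition xn1 :: "nat \<Rightarrow> 'a::comm_ring_1 poly" where
  "xn1 n = monom 1 n - 1"

definition poly_ord :: "'a::field poly \<Rightarrow> nat" where
  "poly_ord h = (LEAST e. e \<ge> 1 \<and> h dvd xn1 e)"

text \<open>The ideal K of A_n generated by (x^n-1)/h, elements represented
  by their canonical representatives of degree < n.\<close>
definition cyc_code :: "nat \<Rightarrow> 'a::field poly \<Rightarrow> 'a poly set" where
  "cyc_code n h = {(f * (xn1 n div h)) mod xn1 n | f. True}"

definition hweight :: "'a::zero poly \<Rightarrow> nat" where
  "hweight p = card {i. coeff p i \<noteq> 0}"

definition cyc :: "nat \<Rightarrow> 'a::field poly \<Rightarrow> 'a poly set" where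
  "cyc n z = {(monom 1 i * z) mod xn1 n | i. True}"

definition num_cycles :: "nat \<Rightarrow> 'a::field poly \<Rightarrow> nat" where
  "num_cycles n h = card {cyc n z | z. z \<in> cyc_code n h \<and> z \<noteq> 0}"

end

theory Submission
  imports Defs "HOL-Computational_Algebra.Computational_Algebra"
begin


lemma fermat_const:
  fixes c :: "'a::{field,finite}"
  assumes "c \<noteq> 0"
  shows "c ^ (card (UNIV::'a set) - 1) = 1"
proof -
  let ?S = "UNIV - {0::'a}"
  have fin: "finite ?S" by simp
  have cS: "card ?S = card (UNIV::'a set) - 1" by (simp add: card_Diff_subset)
  have bij: "bij_betw (\<lambda>a. c * a) ?S ?S"
    by (rule bij_betwI[where g="\<lambda>a. a / c"]) (use assms in auto)
  have "prod (\<lambda>a. c * a) ?S = prod id ?S"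
    using prod.reindex_bij_betw[OF bij, of id] by simp
  moreover have "prod (\<lambda>a. c * a) ?S = c ^ card ?S * prod id ?S"
    by (simp add: prod.distrib)
  moreover have "prod id ?S \<noteq> 0" by (simp add: prod_zero_iff)
  ultimately show ?thesis using cS by simp
qed

lemma card_deg_less:
  assumes "m \<ge> 1"
  shows "card {p :: 'a::{field,finite} poly. degree p < m} = card (UNIV::'a set) ^ m"
proof -
  have eq: "{p :: 'a poly. degree p < m} = Poly ` {xs. set xs \<subseteq> UNIV \<and> length xs = m}"
  proof (intro set_eqI iffI)
    fix p :: "'a poly" assume "p \<in> {p. degree p < m}"
    hence d: "degree p < m" by simp
    have "Poly (map (coeff p) [0..<m]) = p"
    proof (rule poly_eqI)
      fix i show "coeff (Poly (map (coeff p) [0..<m])) i = coeff p i"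
        using d by (auto simp: nth_default_def coeff_eq_0)
    qed
    thus "p \<in> Poly ` {xs. set xs \<subseteq> UNIV \<and> length xs = m}"
      by (intro image_eqI[of _ _ "map (coeff p) [0..<m]"]) auto
  next
    fix p assume "p \<in> Poly ` {xs. set xs \<subseteq> (UNIV::'a set) \<and> length xs = m}"
    then obtain xs where p: "p = Poly xs" and l: "length xs = m" by auto
    have "degree (Poly xs) \<le> length xs - 1"
      by (rule degree_le) (auto simp: nth_default_def)
    thus "p \<in> {p. degree p < m}" using p l assms by auto
  qed
  have inj: "inj_on Poly {xs. set xs \<subseteq> (UNIV::'a set) \<and> length xs = m}"
  proof (rule inj_onI)
    fix xs ys :: "'a list"
    assume a: "xs \<in> {xs. set xs \<subseteq> UNIV \<and> length xs = m}" "ys \<in> {xs. set xs \<subseteq> UNIV \<and> length xs = m}"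
      and e: "Poly xs = Poly ys"
    show "xs = ys"
    proof (rule nth_equalityI)
      show "length xs = length ys" using a by simp
      fix i assume "i < length xs"
      have "coeff (Poly xs) i = coeff (Poly ys) i" using e by simp
      thus "xs ! i = ys ! i" using a \<open>i < length xs\<close> by (simp add: nth_default_def)
    qed
  qed
  show ?thesis unfolding eq card_image[OF inj] by (rule card_lists_length_eq) simp
qed

lemma finite_deg_less: "finite {p :: 'a::{field,finite} poly. degree p < m}"
proof -
  have "{p :: 'a poly. degree p < m} \<subseteq> {p. degree p < Suc m}" by auto
  moreover have "card {p :: 'a poly. degree p < Suc m} > 0"
  proof -
    have "card (UNIV::'a set) > 0" using finite_UNIV_card_ge_0 finite_UNIV by blast
    thus ?thesis using card_deg_less[of "Suc m", where 'a='a] by simp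
  qed
  ultimately show ?thesis using card_ge_0_finite finite_subset by blast
qed




locale cc =
  fixes h :: "'a::{field,finite} poly" and n :: nat
  assumes irr: "irreducible h" and deg: "degree h > 1" and nd: "n = poly_ord h"
begin

lemma prime: "prime_elem h" using irr by (rule field_poly_irreducible_imp_prime)

lemma hnz: "h \<noteq> 0" using deg by auto

lemma not_dvd_x: "\<not> h dvd monom 1 k"
proof
  assume "h dvd monom 1 k"
  hence "h dvd [:0,1:] ^ k" by (simp add: monom_altdef)
  hence "h dvd [:0,1:]" using prime prime_elem_dvd_power by blast
  hence "degree h \<le> degree [:0,1::'a:]" by (rule dvd_imp_degree_le) simp
  thus False using deg by simp
qed

lemma cancel:
  assumes "\<not> h dvd f" "(a * f) mod h = (b * f) mod h"
  shows "a mod h = b mod h"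
proof -
  have "h dvd (a - b) * f" using assms(2) by (simp add: mod_eq_dvd_iff algebra_simps)
  hence "h dvd a - b" using assms(1) prime prime_elem_dvd_mult_iff by blast
  thus ?thesis by (simp add: mod_eq_dvd_iff)
qed

lemma ex_ord: "\<exists>e. e \<ge> 1 \<and> h dvd xn1 e"
proof -
  let ?f = "\<lambda>k::nat. monom (1::'a) k mod h"
  have "range ?f \<subseteq> {p. degree p < degree h}"
  proof
    fix p assume "p \<in> range ?f"
    then obtain k where p: "p = ?f k" by auto
    show "p \<in> {p. degree p < degree h}"
      using degree_mod_less[OF hnz, of "monom 1 k"] deg p by auto
  qed
  hence "finite (range ?f)" using finite_deg_less finite_subset by blast
  hence "\<not> inj ?f" using finite_imageD infinite_UNIV_nat by blast
  then obtain i j where ij: "i \<noteq> j" "?f i = ?f j" unfolding inj_def by blast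
  have "\<exists>i j. i < j \<and> ?f i = ?f j"
  proof (cases "i < j")
    case True thus ?thesis using ij by blast
  next
    case False thus ?thesis using ij by (metis linorder_neqE_nat)
  qed
  then obtain i j where ij: "i < j" "?f i = ?f j" by blast
  have "(1 * monom 1 i) mod h = (monom 1 (j - i) * monom 1 i) mod h"
    using ij by (simp add: mult_monom)
  hence "1 mod h = monom 1 (j - i) mod h" using cancel[OF not_dvd_x] by blast
  hence "h dvd xn1 (j - i)" by (simp add: xn1_def mod_eq_dvd_iff dvd_diff_commute)
  thus ?thesis using ij by (intro exI[of _ "j - i"]) auto
qed

lemma n_pos: "n \<ge> 1" and h_dvd: "h dvd xn1 n"
  using LeastI_ex[OF ex_ord] unfolding nd poly_ord_def by auto

lemma minimal: "1 \<le> e \<Longrightarrow> e < n \<Longrightarrow> \<not> h dvd xn1 e"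
  unfolding nd poly_ord_def using not_less_Least by blast

lemma xn_mod: "monom 1 n mod h = 1 mod h"
  using h_dvd by (simp add: xn1_def mod_eq_dvd_iff dvd_diff_commute)

lemma xpow_n_mult: "monom 1 (n * k) mod h = 1 mod h"
proof -
  have "monom 1 (n * k) = (monom (1::'a) n) ^ k" by (simp add: monom_power)
  hence "monom 1 (n * k) mod h = ((monom 1 n mod h) ^ k) mod h" by (simp add: power_mod)
  also have "\<dots> = 1 mod h" by (simp add: xn_mod power_mod)
  finally show ?thesis .
qed

lemma xpow_one_iff: "monom 1 e mod h = 1 mod h \<longleftrightarrow> n dvd e"
proof
  assume a: "monom 1 e mod h = 1 mod h"
  have "monom (1::'a) e = monom 1 (n * (e div n)) * monom 1 (e mod n)"
    by (simp add: mult_monom)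
  hence "monom 1 e mod h = ((monom 1 (n * (e div n)) mod h) * monom 1 (e mod n)) mod h"
    by (simp add: mod_mult_left_eq)
  hence "1 mod h = monom 1 (e mod n) mod h" using a by (simp add: xpow_n_mult mod_mult_left_eq)
  hence "h dvd xn1 (e mod n)" by (simp add: xn1_def mod_eq_dvd_iff dvd_diff_commute)
  moreover have "e mod n < n" using n_pos by simp
  ultimately have "e mod n = 0" using minimal by (metis less_one not_less)
  thus "n dvd e" by auto
next
  assume "n dvd e" thus "monom 1 e mod h = 1 mod h" using xpow_n_mult by auto
qed

lemma xpow_eq_iff:
  assumes "i \<le> j" "\<not> h dvd f"
  shows "(monom 1 i * f) mod h = (monom 1 j * f) mod h \<longleftrightarrow> n dvd j - i"
proof -
  have j: "monom (1::'a) j = monom 1 (j - i) * monom 1 i" using assms by (simp add: mult_monom)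
  have "(monom 1 i * f) mod h = (monom 1 j * f) mod h \<longleftrightarrow> (1 * (monom 1 i * f)) mod h = (monom 1 (j - i) * (monom 1 i * f)) mod h"
    by (simp add: j mult.assoc)
  also have "\<dots> \<longleftrightarrow> 1 mod h = monom 1 (j - i) mod h"
  proof
    assume "(1 * (monom 1 i * f)) mod h = (monom 1 (j - i) * (monom 1 i * f)) mod h"
    moreover have "\<not> h dvd monom 1 i * f" using assms(2) not_dvd_x prime prime_elem_dvd_mult_iff by blast
    ultimately show "1 mod h = monom 1 (j - i) mod h" using cancel by blast
  next
    assume "1 mod h = monom 1 (j - i) mod h"
    thus "(1 * (monom 1 i * f)) mod h = (monom 1 (j - i) * (monom 1 i * f)) mod h"
      by (metis mod_mult_left_eq)
  qed
  also have "\<dots> \<longleftrightarrow> n dvd j - i" using xpow_one_iff by metis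
  finally show ?thesis .
qed

end



context cc begin

definition "M = (xn1 n :: 'a poly)"
definition "g = M div h"
definition "cw f = (f * g) mod M"

lemma M_hg: "M = h * g"
  using h_dvd unfolding M_def g_def by simp

lemma coeff_M: "coeff M k = (if k = n then 1 else 0) - (if k = 0 then 1 else 0)"
  unfolding M_def xn1_def by (simp add: coeff_monom)

lemma M_nz: "M \<noteq> 0"
proof
  assume "M = 0" hence "coeff M n = 0" by simp
  thus False using coeff_M n_pos by simp
qed

lemma deg_M: "degree M = n"
proof (rule antisym)
  show "degree M \<le> n" by (rule degree_le) (use n_pos in \<open>auto simp: coeff_M\<close>)
  show "n \<le> degree M" by (rule le_degree) (use n_pos in \<open>auto simp: coeff_M\<close>)
qed

lemma g_nz: "g \<noteq> 0" using M_nz M_hg by auto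

lemma cw_eq: "cw a = cw b \<longleftrightarrow> a mod h = b mod h"
proof -
  have "cw a = cw b \<longleftrightarrow> h * g dvd (a - b) * g"
    unfolding cw_def M_hg[symmetric] by (simp add: mod_eq_dvd_iff algebra_simps)
  also have "\<dots> \<longleftrightarrow> h dvd a - b" using g_nz by simp
  finally show ?thesis by (simp add: mod_eq_dvd_iff)
qed

lemma cw_zero: "cw a = 0 \<longleftrightarrow> h dvd a"
  using cw_eq[of a 0] by (simp add: cw_def dvd_eq_mod_eq_0)

lemma cw_mod: "cw (a mod h) = cw a"
  using cw_eq by simp

lemma cw_shift: "(monom 1 i * cw f) mod M = cw (monom 1 i * f)"
  unfolding cw_def by (simp add: mod_mult_right_eq mult.assoc)

lemma cw_smult: "cw (smult c f) = smult c (cw f)"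
  unfolding cw_def by (simp add: mod_smult_left)

lemma cw_high: "k \<ge> n \<Longrightarrow> coeff (cw f) k = 0"
proof -
  assume k: "k \<ge> n"
  have "cw f = 0 \<or> degree (cw f) < n"
    using degree_mod_less[OF M_nz, of "f * g"] deg_M unfolding cw_def by simp
  thus ?thesis
  proof
    assume "cw f = 0" thus ?thesis by simp
  next
    assume "degree (cw f) < n" thus ?thesis using k by (intro coeff_eq_0) simp
  qed
qed

lemma shift1:
  assumes hp: "\<And>k. k \<ge> n \<Longrightarrow> coeff p k = 0" and j: "j < n"
  shows "coeff ((monom 1 1 * p) mod M) (Suc j mod n) = coeff p j"
proof -
  define c where "c = coeff p (n - 1)"
  define r where "r = monom 1 1 * p - smult c M"
  have cr: "coeff r k = (if k < 1 then 0 else coeff p (k - 1)) - c * ((if k = n then 1 else 0) - (if k = 0 then 1 else 0))" for k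
    unfolding r_def by (simp add: coeff_monom_mult coeff_M)
  have "degree r \<le> n - 1"
  proof (rule degree_le, intro allI impI)
    fix k assume "n - 1 < k"
    thus "coeff r k = 0" using n_pos hp[of "k - 1"] by (cases "k = n") (auto simp: cr c_def)
  qed
  hence dr: "degree r < degree M" using n_pos deg_M by simp
  have "(monom 1 1 * p) mod M = r mod M"
    unfolding r_def by (simp add: mod_eq_dvd_iff dvd_smult)
  also have "\<dots> = r" using dr by (rule mod_poly_less)
  finally have e: "(monom 1 1 * p) mod M = r" .
  show ?thesis
  proof (cases "Suc j < n")
    case True thus ?thesis unfolding e cr by simp
  next
    case False hence "Suc j = n" using j by simp
    thus ?thesis unfolding e cr using n_pos by (simp add: c_def flip: \<open>Suc j = n\<close>)
  qed
qed

lemma shiftk: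
  assumes "i < n"
  shows "coeff (cw (monom 1 k * f)) ((i + k) mod n) = coeff (cw f) i"
proof (induction k)
  case 0 thus ?case using assms by simp
next
  case (Suc k)
  have "cw (monom 1 (Suc k) * f) = (monom 1 1 * cw (monom 1 k * f)) mod M"
    by (simp add: cw_shift mult_monom flip: mult.assoc)
  moreover have "(i + Suc k) mod n = Suc ((i + k) mod n) mod n" by (simp add: mod_Suc_eq)
  ultimately have "coeff (cw (monom 1 (Suc k) * f)) ((i + Suc k) mod n)
     = coeff (cw (monom 1 k * f)) ((i + k) mod n)"
    using shift1[of "cw (monom 1 k * f)" "(i + k) mod n"] cw_high n_pos by simp
  thus ?case using Suc by simp
qed

lemma coeff_cw: "i < n \<Longrightarrow> coeff (cw f) i = coeff (cw (monom 1 (n - i) * f)) 0"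
  using shiftk[of i "n - i" f] by simp

definition "L u = coeff (cw u) 0"

lemma weight:
  "hweight (cw f) = card {j \<in> {1..n}. L (monom 1 j * f) \<noteq> 0}"
proof -
  have "{i. coeff (cw f) i \<noteq> 0} = {i. i < n \<and> coeff (cw f) i \<noteq> 0}"
    using cw_high by (metis not_less)
  also have "\<dots> = (\<lambda>j. n - j) ` {j \<in> {1..n}. L (monom 1 j * f) \<noteq> 0}"
  proof (intro set_eqI iffI)
    fix i assume "i \<in> {i. i < n \<and> coeff (cw f) i \<noteq> 0}"
    hence i: "i < n" "coeff (cw f) i \<noteq> 0" by auto
    show "i \<in> (\<lambda>j. n - j) ` {j \<in> {1..n}. L (monom 1 j * f) \<noteq> 0}"
      using i coeff_cw[of i f] by (intro image_eqI[of _ _ "n - i"]) (auto simp: L_def)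
  next
    fix i assume "i \<in> (\<lambda>j. n - j) ` {j \<in> {1..n}. L (monom 1 j * f) \<noteq> 0}"
    then obtain j where j: "i = n - j" "1 \<le> j" "j \<le> n" "L (monom 1 j * f) \<noteq> 0" by auto
    thus "i \<in> {i. i < n \<and> coeff (cw f) i \<noteq> 0}"
      using coeff_cw[of i f] by (auto simp: L_def)
  qed
  finally have "{i. coeff (cw f) i \<noteq> 0} = (\<lambda>j. n - j) ` {j \<in> {1..n}. L (monom 1 j * f) \<noteq> 0}" .
  moreover have "inj_on (\<lambda>j. n - j) {j \<in> {1..n}. L (monom 1 j * f) \<noteq> 0}"
    by (rule inj_onI) auto
  ultimately show ?thesis unfolding hweight_def by (simp add: card_image)
qed

end



lemma fiber_sum:
  assumes "finite P" "f ` P \<subseteq> N" "finite N"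
  shows "card P = (\<Sum>u\<in>N. card {p\<in>P. f p = u})"
proof -
  have "P = (\<Union>u\<in>N. {p\<in>P. f p = u})" using assms(2) by auto
  hence "card P = card (\<Union>u\<in>N. {p\<in>P. f p = u})" by simp
  also have "\<dots> = (\<Sum>u\<in>N. card {p\<in>P. f p = u})"
    by (rule card_UN_disjoint) (use assms in auto)
  finally show ?thesis .
qed

context cc begin

definition "NZ = {u :: 'a poly. u \<noteq> 0 \<and> degree u < degree h}"

lemma card_NZ: "card NZ = card (UNIV::'a set) ^ degree h - 1"
proof -
  have "{u :: 'a poly. degree u < degree h} = insert 0 NZ" unfolding NZ_def using deg by (auto simp del: One_nat_def)
  moreover have "finite NZ" unfolding NZ_def using finite_deg_less[of "degree h"]
    by (rule rev_finite_subset) auto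
  moreover have "0 \<notin> NZ" unfolding NZ_def by simp
  ultimately have "card {u :: 'a poly. degree u < degree h} = Suc (card NZ)" by simp
  moreover have "card {u::'a poly. degree u < degree h} = card (UNIV::'a set) ^ degree h"
    by (rule card_deg_less) (use deg in simp)
  ultimately show ?thesis by simp
qed

lemma finite_NZ: "finite NZ"
  unfolding NZ_def using finite_deg_less[of "degree h"] by (rule rev_finite_subset) auto

lemma NZ_ndvd: "u \<in> NZ \<Longrightarrow> \<not> h dvd u"
proof
  assume "u \<in> NZ" "h dvd u"
  hence "degree h \<le> degree u" "degree u < degree h" unfolding NZ_def using dvd_imp_degree_le[of h u] by auto
  thus False by simp
qed

lemma NZ_mod: "u \<in> NZ \<Longrightarrow> u mod h = u"
proof -
  assume "u \<in> NZ"
  hence "degree u < degree h" unfolding NZ_def by simp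
  thus ?thesis by (rule mod_poly_less)
qed

lemma mod_in_NZ: "\<not> h dvd f \<Longrightarrow> f mod h \<in> NZ"
proof -
  assume "\<not> h dvd f"
  hence nz: "f mod h \<noteq> 0" using dvd_eq_mod_eq_0 by blast
  hence "degree (f mod h) < degree h" using degree_mod_less[OF hnz, of f] by blast
  thus ?thesis using nz unfolding NZ_def by blast
qed


lemma ndvd_mult: "\<not> h dvd a \<Longrightarrow> \<not> h dvd b \<Longrightarrow> \<not> h dvd a * b"
  using prime_elem_dvd_mult_iff[OF prime, of a b] by simp

lemma code_eq: "cyc_code n h = range cw"
  unfolding cyc_code_def cw_def g_def M_def by auto

lemma K0_eq: "{z \<in> cyc_code n h. z \<noteq> 0} = cw ` NZ"
proof (intro set_eqI iffI)
  fix z assume "z \<in> {z \<in> cyc_code n h. z \<noteq> 0}"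
  then obtain f where z: "z = cw f" "z \<noteq> 0" using code_eq by auto
  hence "\<not> h dvd f" using cw_zero by simp
  hence "f mod h \<in> NZ" by (rule mod_in_NZ)
  moreover have "z = cw (f mod h)" by (simp add: z cw_mod)
  ultimately show "z \<in> cw ` NZ" by blast
next
  fix z assume "z \<in> cw ` NZ"
  then obtain u where "u \<in> NZ" "z = cw u" by auto
  thus "z \<in> {z \<in> cyc_code n h. z \<noteq> 0}" using NZ_ndvd cw_zero code_eq by auto
qed

lemma card_K0: "card {z \<in> cyc_code n h. z \<noteq> 0} = card (UNIV::'a set) ^ degree h - 1"
proof -
  have "inj_on cw NZ"
    by (rule inj_onI) (metis cw_eq NZ_mod)
  thus ?thesis unfolding K0_eq card_NZ[symmetric] by (rule card_image)
qed

lemma cyc_cw: "cyc n (cw f) = range (\<lambda>i. cw (monom 1 i * f))"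
  unfolding cyc_def M_def[symmetric] cw_shift by auto

lemma cw_xmod: "\<not> h dvd f \<Longrightarrow> cw (monom 1 i * f) = cw (monom 1 (i mod n) * f)"
  using xpow_eq_iff[of "i mod n" i f] cw_eq by (simp add: minus_mod_eq_mult_div)

lemma cyc_cw': "\<not> h dvd f \<Longrightarrow> cyc n (cw f) = (\<lambda>i. cw (monom 1 i * f)) ` {0..<n}"
proof -
  assume f: "\<not> h dvd f"
  have "cw (monom 1 i * f) \<in> (\<lambda>i. cw (monom 1 i * f)) ` {0..<n}" for i
  proof -
    have "i mod n \<in> {0..<n}" using n_pos by simp
    thus ?thesis using cw_xmod[OF f, of i] by (intro image_eqI[of _ _ "i mod n"]) auto
  qed
  thus ?thesis unfolding cyc_cw by auto
qed

lemma card_cyc: "\<not> h dvd f \<Longrightarrow> card (cyc n (cw f)) = n"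
proof -
  assume f: "\<not> h dvd f"
  have "inj_on (\<lambda>i. cw (monom 1 i * f)) {0..<n}"
  proof (rule inj_onI)
    fix i j assume ij: "i \<in> {0..<n}" "j \<in> {0..<n}" "cw (monom 1 i * f) = cw (monom 1 j * f)"
    hence e: "(monom 1 i * f) mod h = (monom 1 j * f) mod h" using cw_eq by blast
    show "i = j"
    proof (cases "i \<le> j")
      case True
      hence "n dvd j - i" using xpow_eq_iff[OF True f] e by simp
      moreover have "j - i < n" using ij by auto
      ultimately have "j - i = 0" using dvd_imp_le[of n "j - i"] by (meson not_le neq0_conv)
      thus ?thesis using True by simp
    next
      case False
      hence "n dvd i - j" using xpow_eq_iff[of j i f] f e by simp
      moreover have "i - j < n" using ij by auto
      ultimately have "i - j = 0" using dvd_imp_le[of n "i - j"] by (meson not_le neq0_conv)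
      thus ?thesis using False by simp
    qed
  qed
  thus ?thesis unfolding cyc_cw'[OF f] by (simp add: card_image)
qed

lemma cyc_sub:
  assumes "cw (monom 1 i * f1) = cw (monom 1 j * f2)" "\<not> h dvd f2"
  shows "cyc n (cw f2) \<subseteq> cyc n (cw f1)"
proof
  fix z assume "z \<in> cyc n (cw f2)"
  then obtain k where z: "z = cw (monom 1 k * f2)" unfolding cyc_cw by auto
  define t where "t = k + (n - 1) * j"
  have "(monom 1 k * f2) mod h = (monom 1 (k + n * j) * f2) mod h"
    using xpow_eq_iff[of k "k + n * j" f2] assms(2) by simp
  also have "monom 1 (k + n * j) * f2 = monom 1 t * (monom 1 j * f2)"
  proof -
    obtain n' where n': "n = Suc n'" using n_pos by (cases n) auto
    have "k + n * j = t + j" unfolding t_def n' by simp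
    thus ?thesis by (simp add: mult_monom flip: mult.assoc)
  qed
  finally have "cw (monom 1 k * f2) = cw (monom 1 t * (monom 1 j * f2))" using cw_eq by simp
  also have "\<dots> = cw (monom 1 t * (monom 1 i * f1))"
  proof -
    have e: "(monom 1 i * f1) mod h = (monom 1 j * f2) mod h" using assms(1) cw_eq by blast
    have "(monom 1 t * (monom 1 j * f2)) mod h = (monom 1 t * (monom 1 i * f1)) mod h"
      by (metis e mod_mult_right_eq)
    thus ?thesis using cw_eq by blast
  qed
  also have "\<dots> = cw (monom 1 (t + i) * f1)" by (simp add: mult_monom flip: mult.assoc)
  finally have "z = cw (monom 1 (t + i) * f1)" using z by simp
  thus "z \<in> cyc n (cw f1)" unfolding cyc_cw by (rule range_eqI)
qed

lemma n_times_s: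
  "n * num_cycles n h = card (UNIV::'a set) ^ degree h - 1"
proof -
  let ?C = "{cyc n z | z. z \<in> cyc_code n h \<and> z \<noteq> 0}"
  let ?K0 = "{z \<in> cyc_code n h. z \<noteq> 0}"
  have C1: "?C = cyc n ` ?K0" by blast
  have C: "?C = (\<lambda>u. cyc n (cw u)) ` NZ"
    unfolding C1 K0_eq image_image ..
  have sub: "cyc n (cw u) \<subseteq> ?K0" if u: "u \<in> NZ" for u
  proof
    fix z assume "z \<in> cyc n (cw u)"
    then obtain i where z: "z = cw (monom 1 i * u)" unfolding cyc_cw by blast
    have "\<not> h dvd monom 1 i * u" by (rule ndvd_mult[OF not_dvd_x NZ_ndvd[OF u]])
    hence "z \<noteq> 0" unfolding z cw_zero .
    moreover have "z \<in> cyc_code n h" unfolding code_eq z by (rule rangeI)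
    ultimately show "z \<in> ?K0" by blast
  qed
  have mem: "cw u \<in> cyc n (cw u)" for u
    unfolding cyc_cw by (rule range_eqI[of _ _ 0]) simp
  have U: "\<Union>?C = ?K0"
  proof (rule antisym)
    show "\<Union>?C \<subseteq> ?K0" unfolding C using sub by blast
    show "?K0 \<subseteq> \<Union>?C" unfolding C K0_eq using mem by blast
  qed
  have fK: "finite ?K0" unfolding K0_eq using finite_NZ by (rule finite_imageI)
  have "n * card ?C = card (\<Union>?C)"
  proof (rule card_partition)
    show "finite ?C" unfolding C using finite_NZ by (rule finite_imageI)
    show "finite (\<Union>?C)" unfolding U by (rule fK)
    show "card c = n" if cC: "c \<in> ?C" for c
    proof -
      obtain u where "u \<in> NZ" "c = cyc n (cw u)" using cC unfolding C by blast
      thus ?thesis using card_cyc NZ_ndvd by blast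
    qed
    show "c1 \<inter> c2 = {}" if cs: "c1 \<in> ?C" "c2 \<in> ?C" "c1 \<noteq> c2" for c1 c2
    proof -
      obtain u1 where u1: "u1 \<in> NZ" "c1 = cyc n (cw u1)" using cs(1) unfolding C by blast
      obtain u2 where u2: "u2 \<in> NZ" "c2 = cyc n (cw u2)" using cs(2) unfolding C by blast
      show "c1 \<inter> c2 = {}"
      proof (rule ccontr)
        assume "c1 \<inter> c2 \<noteq> {}"
        then obtain z where "z \<in> c1" "z \<in> c2" by blast
        then obtain i j where e: "cw (monom 1 i * u1) = cw (monom 1 j * u2)"
          unfolding u1(2) u2(2) cyc_cw by blast
        have "c2 \<subseteq> c1" unfolding u1(2) u2(2) by (rule cyc_sub[OF e NZ_ndvd[OF u2(1)]])
        moreover have "c1 \<subseteq> c2" unfolding u1(2) u2(2) by (rule cyc_sub[OF e[symmetric] NZ_ndvd[OF u1(1)]])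
        ultimately show False using cs(3) by blast
      qed
    qed
  qed
  hence "n * card ?C = card ?K0" by (simp only: U)
  hence "n * card ?C = card (UNIV::'a set) ^ degree h - 1" by (simp only: card_K0)
  thus ?thesis by (simp only: num_cycles_def)
qed
end



lemma count_cong:
  fixes A :: "nat set"
  assumes A: "A \<subseteq> {1..n}" and pw: "\<And>j j'. j \<in> A \<Longrightarrow> j' \<in> A \<Longrightarrow> j' \<le> j \<Longrightarrow> t dvd j - j'"
    and nt: "n = t * d" and t: "t > 0"
  shows "card A \<le> d"
proof -
  let ?phi = "\<lambda>j. (j - 1) div t"
  have inj: "inj_on ?phi A"
  proof (rule inj_onI)
    fix j j' assume jj: "j \<in> A" "j' \<in> A" "?phi j = ?phi j'"
    have key: "a = b" if ab: "a \<in> A" "b \<in> A" "b \<le> a" "?phi a = ?phi b" for a b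
    proof -
      have "t dvd a - b" using pw ab by blast
      moreover have "a - b = (a - 1) - (b - 1)" using ab A by auto
      ultimately have "(a - 1) mod t = (b - 1) mod t"
        using mod_eq_dvd_iff_nat[of "b - 1" "a - 1" t] ab by simp
      moreover have "a - 1 = (a - 1) div t * t + (a - 1) mod t" by (rule div_mult_mod_eq[symmetric])
      moreover have "b - 1 = (b - 1) div t * t + (b - 1) mod t" by (rule div_mult_mod_eq[symmetric])
      ultimately have "a - 1 = b - 1" using ab(4) by simp
      moreover have "a \<ge> 1" "b \<ge> 1" using ab A by (auto dest: subsetD)
      ultimately show "a = b" by simp
    qed
    show "j = j'"
    proof (cases "j' \<le> j")
      case True thus ?thesis using key jj by blast
    next
      case False thus ?thesis using key[of j' j] jj by simp
    qed
  qed
  have "?phi ` A \<subseteq> {0..<d}"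
  proof
    fix y assume "y \<in> ?phi ` A"
    then obtain j where j: "j \<in> A" "y = ?phi j" by blast
    have "j \<in> {1..n}" using j A by blast
    hence "j - 1 < d * t" using nt by (auto simp: mult.commute)
    hence "(j - 1) div t < d" by (rule less_mult_imp_div_less)
    thus "y \<in> {0..<d}" using j by simp
  qed
  from card_inj_on_le[OF inj this] show ?thesis by simp
qed

context cc begin

lemma pair_dvd:
  assumes f: "\<not> h dvd f" and c: "c \<noteq> 0" "c' \<noteq> 0" and jj: "j' \<le> j"
    and e: "smult c (monom 1 j * f) mod h = smult c' (monom 1 j' * f) mod h"
  shows "n dvd (j - j') * (card (UNIV::'a set) - 1)"
proof -
  let ?k = "card (UNIV::'a set) - 1"
  have "(smult c (monom 1 j * f)) ^ ?k mod h = (smult c (monom 1 j * f) mod h) ^ ?k mod h"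
    by (rule power_mod[symmetric])
  also have "\<dots> = (smult c' (monom 1 j' * f) mod h) ^ ?k mod h" by (simp only: e)
  also have "\<dots> = (smult c' (monom 1 j' * f)) ^ ?k mod h" by (rule power_mod)
  finally have "(smult c (monom 1 j * f)) ^ ?k mod h = (smult c' (monom 1 j' * f)) ^ ?k mod h" .
  moreover have "(smult c (monom 1 j * f)) ^ ?k = monom 1 (j * ?k) * f ^ ?k"
    if "c \<noteq> 0" for c j
  proof -
    have "c ^ ?k = 1" by (rule fermat_const[OF that])
    thus ?thesis by (simp add: smult_power power_mult_distrib monom_power)
  qed
  ultimately have "(monom 1 (j' * ?k) * f ^ ?k) mod h = (monom 1 (j * ?k) * f ^ ?k) mod h"
    using c by simp
  moreover have "\<not> h dvd f ^ ?k" using f prime prime_elem_dvd_power by blast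
  moreover have "j' * ?k \<le> j * ?k" using jj by simp
  ultimately have "n dvd j * ?k - j' * ?k" using xpow_eq_iff by blast
  thus ?thesis by (simp add: diff_mult_distrib)
qed

lemma fiber_bound:
  assumes f: "\<not> h dvd f"
  defines "d \<equiv> gcd (card (UNIV::'a set) - 1) n"
  shows "card {p \<in> (UNIV - {0}) \<times> {1..n}. smult (fst p) (monom 1 (snd p) * f) mod h = u} \<le> d"
proof -
  let ?k = "card (UNIV::'a set) - 1"
  let ?F = "{p \<in> (UNIV - {0}) \<times> {1..n}. smult (fst p) (monom 1 (snd p) * f) mod h = u}"
  define t where "t = n div d"
  have dpos: "d > 0" unfolding d_def using n_pos by simp
  have nt: "n = t * d" unfolding t_def d_def by simp
  have tpos: "t > 0" using nt n_pos by (cases t) auto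
  define b' where "b' = ?k div d"
  have kd: "?k = d * b'" unfolding d_def b'_def by simp
  have cop: "coprime t b'" unfolding b'_def unfolding t_def d_def
    using div_gcd_coprime[of n ?k] n_pos by (simp add: gcd.commute)
  have inj: "inj_on snd ?F"
  proof (rule inj_onI)
    fix p p' assume pp: "p \<in> ?F" "p' \<in> ?F" "snd p = snd p'"
    let ?X = "monom 1 (snd p) * f"
    have "smult (fst p) ?X mod h = smult (fst p') ?X mod h" using pp by simp
    hence "h dvd smult (fst p - fst p') ?X" by (simp add: mod_eq_dvd_iff smult_diff_left)
    moreover have "\<not> h dvd ?X" by (rule ndvd_mult[OF not_dvd_x f])
    ultimately have "fst p = fst p'"
    proof -
      assume a: "h dvd smult (fst p - fst p') ?X" "\<not> h dvd ?X"
      show "fst p = fst p'"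
      proof (rule ccontr)
        assume "fst p \<noteq> fst p'"
        hence "fst p - fst p' \<noteq> 0" by simp
        from dvd_smult_cancel[OF a(1) this] a(2) show False by simp
      qed
    qed
    thus "p = p'" using pp(3) by (simp add: prod_eq_iff)
  qed
  have "card (snd ` ?F) \<le> d"
  proof (rule count_cong[OF _ _ nt tpos])
    show "snd ` ?F \<subseteq> {1..n}" by auto
    fix j j' assume j: "j \<in> snd ` ?F" "j' \<in> snd ` ?F" "j' \<le> j"
    obtain p where p: "p \<in> ?F" "j = snd p" using j(1) by blast
    obtain p' where p': "p' \<in> ?F" "j' = snd p'" using j(2) by blast
    have ndv: "n dvd (j - j') * ?k"
    proof (rule pair_dvd[OF f _ _ j(3)])
      show "fst p \<noteq> 0" "fst p' \<noteq> 0" using p(1) p'(1) by auto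
      show "smult (fst p) (monom 1 j * f) mod h = smult (fst p') (monom 1 j' * f) mod h"
        using p p' by simp
    qed
    have "(j - j') * ?k = (j - j') * (d * b')" using kd by simp
    also have "(j - j') * (d * b') = (j - j') * b' * d" by (simp add: ac_simps)
    finally have eq: "(j - j') * ?k = (j - j') * b' * d" .
    have "t * d dvd (j - j') * b' * d" using ndv unfolding eq nt .
    hence "t dvd (j - j') * b'" using dpos by simp
    thus "t dvd j - j'" using cop by (simp add: coprime_dvd_mult_left_iff)
  qed
  thus ?thesis using card_image[OF inj] by simp
qed

end



context cc begin

lemma L_mod: "L (a mod h) = L a" unfolding L_def by (simp only: cw_mod)
lemma L_smult: "L (smult c a) = c * L a" unfolding L_def by (simp add: cw_smult)

lemma equi:
  assumes f: "\<not> h dvd f"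
    and H: "n * (card (UNIV::'a set) - 1) = gcd (card (UNIV::'a set) - 1) n * (card (UNIV::'a set) ^ degree h - 1)"
  shows "(card (UNIV::'a set) - 1) * hweight (cw f) = gcd (card (UNIV::'a set) - 1) n * card {u \<in> NZ. L u \<noteq> 0}"
proof -
  let ?k = "card (UNIV::'a set) - 1"
  let ?d = "gcd (card (UNIV::'a set) - 1) n"
  define P where "P = (UNIV - {0::'a}) \<times> {1..n}"
  define psi where "psi = (\<lambda>p::'a \<times> nat. smult (fst p) (monom 1 (snd p) * f) mod h)"
  have img: "psi ` P \<subseteq> NZ"
  proof
    fix u assume "u \<in> psi ` P"
    then obtain p where p: "p \<in> P" "u = psi p" by blast
    have nd: "\<not> h dvd monom 1 (snd p) * f" by (rule ndvd_mult[OF not_dvd_x f])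
    have "\<not> h dvd smult (fst p) (monom 1 (snd p) * f)"
    proof
      assume "h dvd smult (fst p) (monom 1 (snd p) * f)"
      moreover have "fst p \<noteq> 0" using p(1) unfolding P_def by auto
      ultimately show False using dvd_smult_cancel nd by blast
    qed
    hence "psi p \<in> NZ" unfolding psi_def by (rule mod_in_NZ)
    thus "u \<in> NZ" using p by simp
  qed
  have finP: "finite P" unfolding P_def by simp
  have cardP: "card P = ?k * n" unfolding P_def card_cartesian_product
    by (simp add: card_Diff_singleton)
  have bound: "card {p \<in> P. psi p = u} \<le> ?d" for u
    unfolding P_def psi_def using fiber_bound[OF f, of u] by simp
  have "(\<Sum>u\<in>NZ. card {p \<in> P. psi p = u}) = card P"
    using fiber_sum[OF finP img finite_NZ] by simp
  also have "\<dots> = (\<Sum>u\<in>NZ. ?d)" using cardP H card_NZ by (simp add: mult.commute)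
  finally have sumeq: "(\<Sum>u\<in>NZ. card {p \<in> P. psi p = u}) = (\<Sum>u\<in>NZ. ?d)" .
  have all: "card {p \<in> P. psi p = u} = ?d" if u: "u \<in> NZ" for u
    using sum_mono_inv[OF sumeq bound u finite_NZ] .
  define Q where "Q = {p \<in> P. L (psi p) \<noteq> 0}"
  have Lpsi: "L (psi p) = fst p * L (monom 1 (snd p) * f)" for p
    unfolding psi_def by (simp add: L_mod L_smult)
  have finQ: "finite Q" unfolding Q_def using finP by simp
  have imgQ: "psi ` Q \<subseteq> {u \<in> NZ. L u \<noteq> 0}" using img unfolding Q_def by blast
  have finNZ': "finite {u \<in> NZ. L u \<noteq> 0}" using finite_NZ by simp
  have "card Q = (\<Sum>u\<in>{u \<in> NZ. L u \<noteq> 0}. card {p \<in> Q. psi p = u})"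
    by (rule fiber_sum[OF finQ imgQ finNZ'])
  also have "\<dots> = (\<Sum>u\<in>{u \<in> NZ. L u \<noteq> 0}. ?d)"
  proof (rule sum.cong[OF refl])
    fix u assume u: "u \<in> {u \<in> NZ. L u \<noteq> 0}"
    have "{p \<in> Q. psi p = u} = {p \<in> P. psi p = u}" unfolding Q_def using u by auto
    thus "card {p \<in> Q. psi p = u} = ?d" using all u by simp
  qed
  also have "\<dots> = ?d * card {u \<in> NZ. L u \<noteq> 0}" by simp
  finally have c1: "card Q = ?d * card {u \<in> NZ. L u \<noteq> 0}" .
  have "Q = (UNIV - {0}) \<times> {j \<in> {1..n}. L (monom 1 j * f) \<noteq> 0}"
    unfolding Q_def P_def using Lpsi by auto
  hence "card Q = ?k * hweight (cw f)" unfolding weight card_cartesian_product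
    by (simp add: card_Diff_singleton)
  thus ?thesis using c1 by simp
qed

end


lemma pred_dvd_pow: "(q::nat) \<ge> 1 \<Longrightarrow> q - 1 dvd q ^ m - 1"
proof -
  assume q: "q \<ge> 1"
  have "q mod (q - 1) = 1 mod (q - 1)"
    using q mod_eq_dvd_iff_nat[of 1 q "q - 1"] by simp
  hence "q ^ m mod (q - 1) = 1 ^ m mod (q - 1)" by (metis power_mod)
  moreover have "q ^ m \<ge> 1" using q by simp
  ultimately show ?thesis using mod_eq_dvd_iff_nat[of 1 "q ^ m" "q - 1"] by simp
qed

theorem corollary5:
  fixes h :: "'a::{field,finite} poly" and q n m d r R b s :: nat
  assumes "q = card (UNIV :: 'a set)" and "q > 2"
    and "lead_coeff h = 1" and "irreducible h"
    and "m = degree h" and "m > 1"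
    and "n = poly_ord h" and "n \<noteq> q ^ m - 1"
    and "d = gcd (q - 1) n" and "r = n div d"
    and "R = (q ^ m - 1) div (q - 1)" and "b = (q - 1) div d"
    and "s = num_cycles n h"
  shows "(s = b \<longrightarrow> (\<forall>c1\<in>cyc_code n h. \<forall>c2\<in>cyc_code n h.
              c1 \<noteq> 0 \<longrightarrow> c2 \<noteq> 0 \<longrightarrow> hweight c1 = hweight c2))
         \<and> (s = b \<longleftrightarrow> r = R) \<and> (r = R \<longleftrightarrow> gcd s R = 1)"
proof -
  note a = assms
  interpret cc h n using a by unfold_locales auto
  define k where "k = q - 1"
  have kpos: "k > 0" using a(2) unfolding k_def by simp
  have ns: "n * s = q ^ m - 1" using n_times_s a by simp
  have qR: "q ^ m - 1 = R * k" unfolding a(11) k_def using pred_dvd_pow[of q] a(2) by simp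
  have dpos: "d > 0" using a(9) n_pos by simp
  have nd: "n = d * r" unfolding a(10) a(9) by simp
  have kd: "k = d * b" unfolding a(12) a(9) k_def by simp
  have cop: "coprime r b" unfolding a(10) a(12) a(9)
    using div_gcd_coprime[of n "q - 1"] n_pos by (simp add: gcd.commute)
  have "d * (r * s) = d * (R * b)" using ns qR nd kd by (simp add: ac_simps)
  hence rs: "r * s = R * b" using dpos by simp
  have bpos: "b > 0" using kd kpos by simp
  have rpos: "r > 0" using nd n_pos by (cases r) auto
  have "r dvd R * b" using rs by (metis dvd_triv_left)
  hence "r dvd R" using cop by (simp add: coprime_dvd_mult_left_iff)
  then obtain t where Rt: "R = r * t" by blast
  have st: "s = t * b" using rs Rt rpos by (simp add: ac_simps)
  have e1: "s = b \<longleftrightarrow> r = R"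
  proof
    assume "s = b" thus "r = R" using rs bpos by simp
  next
    assume "r = R" thus "s = b" using rs rpos by simp
  qed
  have e2: "r = R \<longleftrightarrow> gcd s R = 1"
  proof
    assume "r = R"
    hence "s = b" using e1 by simp
    thus "gcd s R = 1" using cop \<open>r = R\<close> by (simp add: gcd.commute coprime_iff_gcd_eq_1)
  next
    assume g: "gcd s R = 1"
    have "t dvd gcd s R" using st Rt by simp
    hence "t = 1" using g by simp
    thus "r = R" using Rt by simp
  qed
  have eq: "hweight c1 = hweight c2"
    if sb: "s = b" and c: "c1 \<in> cyc_code n h" "c2 \<in> cyc_code n h" "c1 \<noteq> 0" "c2 \<noteq> 0" for c1 c2
  proof -
    have "r = R" using sb e1 by simp
    hence H: "n * k = d * (q ^ m - 1)" using nd kd qR by (simp add: ac_simps)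
    have H': "n * (card (UNIV::'a set) - 1) = gcd (card (UNIV::'a set) - 1) n * (card (UNIV::'a set) ^ degree h - 1)"
      using H a(1,5,9) unfolding k_def by simp
    obtain f1 where f1: "c1 = cw f1" using c(1) code_eq by blast
    obtain f2 where f2: "c2 = cw f2" using c(2) code_eq by blast
    have n1: "\<not> h dvd f1" using c(3) f1 cw_zero by simp
    have n2: "\<not> h dvd f2" using c(4) f2 cw_zero by simp
    have "k * hweight c1 = k * hweight c2"
      using equi[OF n1 H'] equi[OF n2 H'] f1 f2 unfolding k_def a(1) by simp
    thus ?thesis using kpos by simp
  qed
  show ?thesis using e1 e2 eq by blast
qed


end
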